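(* Let $H^0(\mathcal A_\theta^{alg},{}_{\omega}\mathcal A_\theta^{alg\ast})$ be the space of formal series $\varphi=\sum_{(n,m)\in\mathbb Z^2}\varphi_{n,m}U_1^nU_2^m$ satisfying $(\omega\cdot a)\varphi=\varphi a$ for all $a\in\mathcal A_\theta^{alg}$. Then every such $\varphi$ is determined by the three coefficients $\varphi_{0,0},\varphi_{0,1},\varphi_{0,-1}$ (which generate the space), and its coefficients satisfy: if $m-n\equiv 0\pmod 3$ then $\varphi_{n,m}=\lambda^{\frac{m^2+n^2+4mn}{6}}\varphi_{0,0}$; if $m-n\equiv\pm1\pmod 3$ then $\varphi_{n,m}=\lambda^{\frac{m^2+n^2+4mn-1}{6}}\varphi_{0,\pm1}$.
   Context: Let $\theta\in\mathbb R\setminus\mathbb Q$, $\lambda=e^{2\pi i\theta}$, and $\lambda^s:=e^{2\pi i\theta s}$ for $s\in\mathbb R$. $\mathcal A_\theta^{alg}$ is the complex algebra of finite sums $\sum a_{n,m}U_1^nU_2^m$ with $U_1,U_2$ invertible and $U_2U_1=\lambda U_1U_2$. $\mathcal A_\theta^{alg\ast}$ denotes the space of all formal series $\sum_{(n,m)\in\mathbb Z^2}\varphi_{n,m}U_1^nU_2^m$ (arbitrary complex coefficients); it is an $\mathcal A_\theta^{alg}$-bimodule via left and right multiplication by elements of $\mathcal A_\theta^{alg}$ using the relation $U_2U_1=\lambda U_1U_2$. $\omega$ denotes the automorphism of $\mathcal A_\theta^{alg}$ with $\omega\cdot U_1=U_2^{-1}$, $\omega\cdot U_2=\lambda^{-1/2}U_1U_2^{-1}$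 (the action of $\begin{pmatrix}0&1\\-1&-1\end{pmatrix}\in SL(2,\mathbb Z)$). ${}_\omega\mathcal A_\theta^{alg\ast}$ is $\mathcal A_\theta^{alg\ast}$ with bimodule structure $a\cdot\varphi=(\omega\cdot a)\varphi$, $\varphi\cdot a=\varphi a$. *)

theory Defs
  imports Complex_Main
begin

text \<open>Elements of the noncommutative torus algebra and formal series are both
represented by their coefficient functions on the monomial basis
U1^n U2^m, indexed by (n,m) in Z x Z.\<close>

type_synonym series = "int \<times> int \<Rightarrow> complex"

text \<open>lambda^s = exp(2 pi i theta s)\<close>
definition lam :: "real \<Rightarrow> real \<Rightarrow> complex" where
  "lam \<theta> s = cis (2 * pi * \<theta> * s)"

definition supp :: "series \<Rightarrow> (int \<times> int) set" where
  "supp a = {p. a p \<noteq> 0}"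

definition Aalg :: "series set" where
  "Aalg = {a. finite (supp a)}"

definition monom :: "int \<times> int \<Rightarrow> complex \<Rightarrow> series" where
  "monom p c = (\<lambda>q. if q = p then c else 0)"

definition U1 :: series where "U1 = monom (1, 0) 1"
definition U2 :: series where "U2 = monom (0, 1) 1"
definition U2inv :: series where "U2inv = monom (0, -1) 1"

text \<open>Left multiplication of a (series) phi by a finitely supported a, using
  U1^a U2^b U1^c U2^d = lambda^(b c) U1^(a+c) U2^(b+d) (from U2 U1 = lambda U1 U2).
  Also serves as the product of the algebra.\<close>
definition lmul :: "real \<Rightarrow> series \<Rightarrow> series \<Rightarrow> series" where
  "lmul \<theta> a \<phi> = (\<lambda>k. \<Sum>p\<in>supp a.
      a p * \<phi> (fst k - fst p, snd k - snd p) * lam \<theta> (of_int (snd p * (fst k - fst p))))"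

definition rmul :: "real \<Rightarrow> series \<Rightarrow> series \<Rightarrow> series" where
  "rmul \<theta> \<phi> a = (\<lambda>k. \<Sum>q\<in>supp a.
      \<phi> (fst k - fst q, snd k - snd q) * a q * lam \<theta> (of_int ((snd k - snd q) * fst q)))"

definition is_omega :: "real \<Rightarrow> (series \<Rightarrow> series) \<Rightarrow> bool" where
  "is_omega \<theta> \<omega> \<longleftrightarrow>
     (\<forall>a\<in>Aalg. \<omega> a \<in> Aalg) \<and>
     (\<forall>a\<in>Aalg. \<forall>b\<in>Aalg. \<omega> (\<lambda>k. a k + b k) = (\<lambda>k. \<omega> a k + \<omega> b k)) \<and>
     (\<forall>a\<in>Aalg. \<forall>c. \<omega> (\<lambda>k. c * a k) = (\<lambda>k. c * \<omega> a k)) \<and>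
     (\<forall>a\<in>Aalg. \<forall>b\<in>Aalg. \<omega> (lmul \<theta> a b) = lmul \<theta> (\<omega> a) (\<omega> b)) \<and>
     bij_betw \<omega> Aalg Aalg \<and>
     \<omega> U1 = U2inv \<and>
     \<omega> U2 = (\<lambda>k. lam \<theta> (-1/2) * lmul \<theta> U1 U2inv k)"

definition H0 :: "real \<Rightarrow> (series \<Rightarrow> series) \<Rightarrow> series set" where
  "H0 \<theta> \<omega> = {\<phi>. \<forall>a\<in>Aalg. lmul \<theta> (\<omega> a) \<phi> = rmul \<theta> \<phi> a}"

end

theory Submission
  imports Defs
begin

lemma lam_mult: "lam t s * lam t r = lam t (s + r)"
  unfolding lam_def by (simp add: cis_mult distrib_left)

lemma lam_nz: "lam t s \<noteq> 0"
  unfolding lam_def by simp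

lemma lam_0: "lam t 0 = 1"
  unfolding lam_def by simp

lemma shift_nat:
  assumes "\<And>x y. h (x + u, y + v) = h (x, y)"
  shows "h (x + int k * u, y + int k * v) = h (x, y)"
proof (induction k)
  case 0 then show ?case by simp
next
  case (Suc k)
  have "h (x + int (Suc k) * u, y + int (Suc k) * v) = h ((x + int k * u) + u, (y + int k * v) + v)"
    by (simp add: algebra_simps)
  also have "\<dots> = h (x + int k * u, y + int k * v)" by (rule assms)
  finally show ?case using Suc by simp
qed

lemma shift_int:
  fixes a u v x y :: int
  assumes "\<And>x y. h (x + u, y + v) = h (x, y)"
  shows "h (x + a * u, y + a * v) = h (x, y)"
proof (cases "a \<ge> 0")
  case True
  then obtain k where "a = int k" using nonneg_int_cases by blast
  then show ?thesis using shift_nat[OF assms] by simp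
next
  case False
  then have "- a \<ge> 0" by simp
  then obtain k where "- a = int k" using nonneg_int_cases by blast
  then have k: "a = - int k" by simp
  have "h (x, y) = h ((x + a * u) + int k * u, (y + a * v) + int k * v)"
    using k by (simp add: algebra_simps)
  also have "\<dots> = h (x + a * u, y + a * v)" by (rule shift_nat[OF assms])
  finally show ?thesis by simp
qed

lemma supp_monom: "c \<noteq> 0 \<Longrightarrow> supp (monom p c) = {p}"
  unfolding supp_def monom_def by auto

theorem mainTheorem3:
  fixes \<theta> :: real and \<omega> :: "series \<Rightarrow> series" and \<phi> :: series
  assumes "\<theta> \<notin> \<rat>"
    and "is_omega \<theta> \<omega>"
    and "\<phi> \<in> H0 \<theta> \<omega>"
  shows "\<forall>n m :: int.
     ((m - n) mod 3 = 0 \<longrightarrow>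
        \<phi> (n, m) = lam \<theta> (of_int (m^2 + n^2 + 4*m*n) / 6) * \<phi> (0, 0)) \<and>
     ((m - n) mod 3 = 1 \<longrightarrow>
        \<phi> (n, m) = lam \<theta> (of_int (m^2 + n^2 + 4*m*n - 1) / 6) * \<phi> (0, 1)) \<and>
     ((m - n) mod 3 = 2 \<longrightarrow>
        \<phi> (n, m) = lam \<theta> (of_int (m^2 + n^2 + 4*m*n - 1) / 6) * \<phi> (0, -1))"
proof -
  have sU1: "supp U1 = {(1,0)}" unfolding U1_def by (simp add: supp_monom)
  have sU2: "supp U2 = {(0,1)}" unfolding U2_def by (simp add: supp_monom)
  have sU2i: "supp U2inv = {(0,-1)}" unfolding U2inv_def by (simp add: supp_monom)
  have U1A: "U1 \<in> Aalg" using sU1 by (simp add: Aalg_def)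
  have U2A: "U2 \<in> Aalg" using sU2 by (simp add: Aalg_def)
  have om1: "\<omega> U1 = U2inv" and om2: "\<omega> U2 = (\<lambda>k. lam \<theta> (-1/2) * lmul \<theta> U1 U2inv k)"
    using assms(2) unfolding is_omega_def by auto
  have om2': "\<omega> U2 = monom (1,-1) (lam \<theta> (-1/2))"
    unfolding om2 lmul_def sU1 by (auto simp: U1_def U2inv_def monom_def lam_0)
  have HH: "\<forall>a\<in>Aalg. lmul \<theta> (\<omega> a) \<phi> = rmul \<theta> \<phi> a"
    using assms(3) unfolding H0_def by simp
  have H1: "lmul \<theta> U2inv \<phi> = rmul \<theta> \<phi> U1"
    using HH[rule_format, OF U1A] om1 by simp
  have H2: "lmul \<theta> (monom (1,-1) (lam \<theta> (-1/2))) \<phi> = rmul \<theta> \<phi> U2"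
    using HH[rule_format, OF U2A] om2' by simp
  have E1: "\<phi> (x+1, y+1) = lam \<theta> (of_int (x+y+1)) * \<phi> (x, y)" for x y
  proof -
    have "lmul \<theta> U2inv \<phi> (x+1, y) = rmul \<theta> \<phi> U1 (x+1, y)" using H1 by simp
    then have "\<phi> (x+1, y+1) * lam \<theta> (of_int (-(x+1))) = \<phi> (x, y) * lam \<theta> (of_int y)"
      unfolding lmul_def rmul_def sU1 sU2i by (simp add: U1_def U2inv_def monom_def)
    then have "\<phi> (x+1, y+1) * (lam \<theta> (of_int (-(x+1))) * lam \<theta> (of_int (x+1)))
        = \<phi> (x, y) * (lam \<theta> (of_int y) * lam \<theta> (of_int (x+1)))" by (simp only: mult.assoc[symmetric])
    then have "\<phi> (x+1, y+1) * lam \<theta> (of_int (-(x+1)) + of_int (x+1))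
        = \<phi> (x, y) * lam \<theta> (of_int y + of_int (x+1))" by (simp only: lam_mult)
    moreover have "(of_int (-(x+1)) + of_int (x+1) :: real) = 0" by simp
    moreover have "(of_int y + of_int (x+1) :: real) = of_int (x+y+1)" by simp
    ultimately have "\<phi> (x+1, y+1) * lam \<theta> 0 = \<phi> (x, y) * lam \<theta> (of_int (x+y+1))"
      by (simp only:)
    then show ?thesis by (simp only: lam_0 mult_1_right) (simp only: mult.commute)
  qed
  have E2: "\<phi> (x+1, y-2) = lam \<theta> (-1/2 - of_int x) * \<phi> (x, y)" for x y
  proof -
    have nz: "lam \<theta> (-1/2) \<noteq> 0" by (rule lam_nz)
    have "lmul \<theta> (monom (1,-1) (lam \<theta> (-1/2))) \<phi> (x+1, y-1) = rmul \<theta> \<phi> U2 (x+1, y-1)"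
      using H2 by simp
    then have "lam \<theta> (-1/2) * \<phi> (x, y) * lam \<theta> (of_int (-x)) = \<phi> (x+1, y-2)"
      unfolding lmul_def rmul_def supp_monom[OF nz] sU2 by (simp add: U2_def monom_def lam_0)
    then have "\<phi> (x+1, y-2) = \<phi> (x, y) * (lam \<theta> (-1/2) * lam \<theta> (of_int (-x)))"
      by (simp only: ac_simps)
    also have "lam \<theta> (-1/2) * lam \<theta> (of_int (-x)) = lam \<theta> (-1/2 - of_int x)"
      by (simp add: lam_mult)
    finally show ?thesis by (simp only: ac_simps)
  qed
  define F where "F = (\<lambda>n m::int. (of_int (m^2 + n^2 + 4*m*n) / 6 :: real))"
  define \<psi> where "\<psi> = (\<lambda>p. lam \<theta> (- F (fst p) (snd p)) * \<phi> p)"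
  have P1: "\<psi> (x + 1, y + 1) = \<psi> (x, y)" for x y
  proof -
    have "\<psi> (x + 1, y + 1) = lam \<theta> (- F (x+1) (y+1)) * lam \<theta> (of_int (x+y+1)) * \<phi> (x, y)"
      unfolding \<psi>_def by (simp add: E1 mult.assoc)
    also have "\<dots> = lam \<theta> (- F (x+1) (y+1) + of_int (x+y+1)) * \<phi> (x, y)" by (simp add: lam_mult)
    also have "- F (x+1) (y+1) + of_int (x+y+1) = - F x y"
      unfolding F_def by (simp add: field_simps power2_eq_square)
    finally show ?thesis unfolding \<psi>_def by simp
  qed
  have P2: "\<psi> (x + 1, y + -2) = \<psi> (x, y)" for x y
  proof -
    have "\<psi> (x + 1, y + -2) = lam \<theta> (- F (x+1) (y-2)) * lam \<theta> (-1/2 - of_int x) * \<phi> (x, y)"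
      unfolding \<psi>_def using E2 by (simp add: mult.assoc)
    also have "\<dots> = lam \<theta> (- F (x+1) (y-2) + (-1/2 - of_int x)) * \<phi> (x, y)" by (simp add: lam_mult)
    also have "- F (x+1) (y-2) + (-1/2 - of_int x) = - F x y"
      unfolding F_def by (simp add: field_simps power2_eq_square)
    finally show ?thesis unfolding \<psi>_def by simp
  qed
  have key: "\<psi> (n, m) = \<psi> (0, r)" if "m - n = 3 * k + r" for n m k r
  proof -
    have "\<psi> (0 + (n+k) * 1 + (-k) * 1, r + (n+k) * 1 + (-k) * -2) = \<psi> (0 + (n+k) * 1, r + (n+k) * 1)"
      by (rule shift_int[where h=\<psi>, OF P2])
    also have "\<dots> = \<psi> (0, r)" by (rule shift_int[where h=\<psi>, OF P1])
    finally show ?thesis using that by (simp add: algebra_simps)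
  qed
  have inv: "\<phi> p = lam \<theta> (F (fst p) (snd p)) * \<psi> p" for p
    unfolding \<psi>_def by (simp add: mult.assoc[symmetric] lam_mult lam_0)
  have C0: "\<phi> (n, m) = lam \<theta> (of_int (m^2 + n^2 + 4*m*n) / 6) * \<phi> (0, 0)"
    if h: "(m - n) mod 3 = 0" for n m :: int
  proof -
    have d: "m - n = 3 * ((m - n) div 3) + 0" using h by (metis div_mult_mod_eq add.commute mult.commute)
    have "\<phi> (n, m) = lam \<theta> (F n m) * \<psi> (0, 0)" using inv[of "(n,m)"] key[OF d] by simp
    also have "\<psi> (0, 0) = \<phi> (0, 0)" unfolding \<psi>_def F_def by (simp add: lam_0)
    finally show ?thesis unfolding F_def .
  qed
  have C1: "\<phi> (n, m) = lam \<theta> (of_int (m^2 + n^2 + 4*m*n - 1) / 6) * \<phi> (0, 1)"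
    if h: "(m - n) mod 3 = 1" for n m :: int
  proof -
    have d: "m - n = 3 * ((m - n) div 3) + 1" using h by (metis div_mult_mod_eq add.commute mult.commute)
    have "\<phi> (n, m) = lam \<theta> (F n m) * \<psi> (0, 1)" using inv[of "(n,m)"] key[OF d] by simp
    also have "\<psi> (0, 1) = lam \<theta> (-1/6) * \<phi> (0, 1)" unfolding \<psi>_def F_def by simp
    finally show ?thesis
      unfolding F_def by (simp add: mult.assoc[symmetric] lam_mult diff_divide_distrib)
  qed
  have C2: "\<phi> (n, m) = lam \<theta> (of_int (m^2 + n^2 + 4*m*n - 1) / 6) * \<phi> (0, -1)"
    if h: "(m - n) mod 3 = 2" for n m :: int
  proof -
    have d0: "m - n = 3 * ((m - n) div 3) + 2" using h by (metis div_mult_mod_eq add.commute mult.commute)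
    have d: "m - n = 3 * ((m - n) div 3 + 1) + -1" using d0 by simp
    have "\<phi> (n, m) = lam \<theta> (F n m) * \<psi> (0, -1)" using inv[of "(n,m)"] key[OF d] by simp
    also have "\<psi> (0, -1) = lam \<theta> (-1/6) * \<phi> (0, -1)" unfolding \<psi>_def F_def by simp
    finally show ?thesis
      unfolding F_def by (simp add: mult.assoc[symmetric] lam_mult diff_divide_distrib)
  qed
  show ?thesis
  proof (intro allI conjI impI)
    fix n m :: int
    show "(m - n) mod 3 = 0 \<Longrightarrow> \<phi> (n, m) = lam \<theta> (of_int (m^2 + n^2 + 4*m*n) / 6) * \<phi> (0, 0)"
      by (rule C0)
    show "(m - n) mod 3 = 1 \<Longrightarrow> \<phi> (n, m) = lam \<theta> (of_int (m^2 + n^2 + 4*m*n - 1) / 6) * \<phi> (0, 1)"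
      by (rule C1)
    show "(m - n) mod 3 = 2 \<Longrightarrow> \<phi> (n, m) = lam \<theta> (of_int (m^2 + n^2 + 4*m*n - 1) / 6) * \<phi> (0, -1)"
      by (rule C2)
  qed
qed

end
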